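(* Consider on $M_h$ with $2h=1$ the reduced cylindrical integrable system $(\ell_{12},\ell_{34})$. Its bifurcation diagram (set of critical values of $(\ell_{12},\ell_{34}):M_h\to\mathbb R^2$) is composed of the four straight lines $\ell_{34}=\pm(1\pm\ell_{12})$, which intersect transversally at $(\pm1,0)$ and $(0,\pm1)$.
   Context: $\mathbf L=(\ell_{12},\ell_{13},\ell_{14},\ell_{23},\ell_{24},\ell_{34})\in\mathbb R^6\cong\mathfrak{so}(4)^*$ with the Lie–Poisson bracket of $\mathfrak{so}(4)$ (extending $\ell_{ji}=-\ell_{ij}$: $\{\ell_{ij},\ell_{jk}\}=-\ell_{ik}$ for distinct $i,j,k$, and $\{\ell_{ij},\ell_{kl}\}=0$ when $\{i,j\}\cap\{k,l\}=\emptyset$). $M_h=\{\mathbf L:\sum_{i<j}\ell_{ij}^2=2h,\ \ell_{12}\ell_{34}-\ell_{13}\ell_{24}+\ell_{14}\ell_{23}=0\}\cong S^2\times S^2$ is a symplectic leaf. *)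

theory Defs
  imports "HOL-Analysis.Analysis"
begin

definition l12 :: "real^6 \<Rightarrow> real" where "l12 L = L$1"
definition l13 :: "real^6 \<Rightarrow> real" where "l13 L = L$2"
definition l14 :: "real^6 \<Rightarrow> real" where "l14 L = L$3"
definition l23 :: "real^6 \<Rightarrow> real" where "l23 L = L$4"
definition l24 :: "real^6 \<Rightarrow> real" where "l24 L = L$5"
definition l34 :: "real^6 \<Rightarrow> real" where "l34 L = L$6"

definition casimirs :: "real^6 \<Rightarrow> real \<times> real" where
  "casimirs L = ((l12 L)^2 + (l13 L)^2 + (l14 L)^2 + (l23 L)^2 + (l24 L)^2 + (l34 L)^2,
                 l12 L * l34 L - l13 L * l24 L + l14 L * l23 L)"

definition M_leaf :: "real \<Rightarrow> (real^6) set" where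
  "M_leaf h = {L. casimirs L = (2 * h, 0)}"

definition cyl_F :: "real^6 \<Rightarrow> real \<times> real" where
  "cyl_F L = (l12 L, l34 L)"

definition level_tangent :: "('a::euclidean_space \<Rightarrow> 'c::euclidean_space) \<Rightarrow> 'a \<Rightarrow> 'a set" where
  "level_tangent G p = {v. frechet_derivative G (at p) v = 0}"

definition crit_point_on_level ::
  "('a::euclidean_space \<Rightarrow> 'b::euclidean_space) \<Rightarrow> ('a \<Rightarrow> 'c::euclidean_space) \<Rightarrow> 'a \<Rightarrow> bool" where
  "crit_point_on_level F G p \<longleftrightarrow> frechet_derivative F (at p) ` level_tangent G p \<noteq> UNIV"

definition bifurcation_diagram :: "real \<Rightarrow> (real \<times> real) set" where
  "bifurcation_diagram h = cyl_F ` {p \<in> M_leaf h. crit_point_on_level cyl_F casimirs p}"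

end

theory Submission
  imports Defs
begin

lemma hd_nth: "((\<lambda>x::real^6. x $ i) has_derivative (\<lambda>x. x $ i)) (at p)"
  by (rule bounded_linear.has_derivative[OF bounded_linear_vec_nth has_derivative_ident])

definition DG :: "real^6 \<Rightarrow> real^6 \<Rightarrow> real \<times> real" where
  "DG p v = (2 * (p$1* v$1 + p$2* v$2 + p$3* v$3 + p$4* v$4 + p$5* v$5 + p$6* v$6),
             p$6* v$1 + p$1* v$6 - p$5* v$2 - p$2* v$5 + p$4* v$3 + p$3* v$4)"

lemma prod_d: "((\<lambda>x::real^6. x$i * x$j) has_derivative (\<lambda>v. p$i * v$j + v$i * p$j)) (at p)"
  using has_derivative_mult[OF hd_nth[of i p] hd_nth[of j p]] by simp

lemma sq_d: "((\<lambda>x::real^6. (x$i)^2) has_derivative (\<lambda>v. 2 * (p$i * v$i))) (at p)"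
  using prod_d[of i i p] by (simp add: power2_eq_square algebra_simps)

lemma cas_deriv: "(casimirs has_derivative DG p) (at p)"
proof -
  have A: "((\<lambda>x::real^6. (x$1)^2 + (x$2)^2 + (x$3)^2 + (x$4)^2 + (x$5)^2 + (x$6)^2) has_derivative
     (\<lambda>v. 2 * (p$1 * v$1) + 2 * (p$2 * v$2) + 2 * (p$3 * v$3) + 2 * (p$4 * v$4) + 2 * (p$5 * v$5) + 2 * (p$6 * v$6))) (at p)"
    by (intro has_derivative_add sq_d)
  have B: "((\<lambda>x::real^6. x$1 * x$6 - x$2 * x$5 + x$3 * x$4) has_derivative
     (\<lambda>v. (p$1 * v$6 + v$1 * p$6) - (p$2 * v$5 + v$2 * p$5) + (p$3 * v$4 + v$3 * p$4))) (at p)"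
    by (intro has_derivative_add has_derivative_diff prod_d)
  show ?thesis
    unfolding casimirs_def l12_def l13_def l14_def l23_def l24_def l34_def
    apply (rule has_derivative_eq_rhs[OF has_derivative_Pair[OF A B]])
    apply (rule ext)
    apply (simp add: DG_def algebra_simps)
    done
qed

lemma F_deriv: "(cyl_F has_derivative (\<lambda>v. (v$1, v$6))) (at p)"
  unfolding cyl_F_def l12_def l34_def
  by (intro has_derivative_Pair hd_nth)

lemma crit_eq: "crit_point_on_level cyl_F casimirs p \<longleftrightarrow>
   (\<lambda>v. (v$1, v$6)) ` {v. DG p v = 0} \<noteq> UNIV"
  unfolding crit_point_on_level_def level_tangent_def
  unfolding frechet_derivative_at[OF cas_deriv[of p], symmetric]
    frechet_derivative_at[OF F_deriv[of p], symmetric]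
  by simp

definition mk6 :: "real \<Rightarrow> real \<Rightarrow> real \<Rightarrow> real \<Rightarrow> real \<Rightarrow> real \<Rightarrow> real^6" where
  "mk6 a b c d e f = (\<chi> i. if i = 1 then a else if i = 2 then b else if i = 3 then c
     else if i = 4 then d else if i = 5 then e else f)"

lemma mk6_nth[simp]: "mk6 a b c d e f $ 1 = a" "mk6 a b c d e f $ 2 = b" "mk6 a b c d e f $ 3 = c"
  "mk6 a b c d e f $ 4 = d" "mk6 a b c d e f $ 5 = e" "mk6 a b c d e f $ 6 = f"
  by (simp_all add: mk6_def)

lemma leaf_sq:
  assumes "p \<in> M_leaf h" "2*h = (1::real)"
  shows "(p$1+p$6)^2 + (p$2-p$5)^2 + (p$3+p$4)^2 = 1"
        "(p$1-p$6)^2 + (p$2+p$5)^2 + (p$3-p$4)^2 = 1"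
proof -
  have a: "(p$1)^2 + (p$2)^2 + (p$3)^2 + (p$4)^2 + (p$5)^2 + (p$6)^2 = 1"
       "p$1*p$6 - p$2*p$5 + p$3*p$4 = 0"
    using assms unfolding M_leaf_def casimirs_def l12_def l13_def l14_def l23_def l24_def l34_def
    by auto
  show "(p$1+p$6)^2 + (p$2-p$5)^2 + (p$3+p$4)^2 = 1"
       "(p$1-p$6)^2 + (p$2+p$5)^2 + (p$3-p$4)^2 = 1"
  proof -
    have "(p$1+p$6)^2 + (p$2-p$5)^2 + (p$3+p$4)^2 = ((p$1)^2 + (p$2)^2 + (p$3)^2 + (p$4)^2 + (p$5)^2 + (p$6)^2)
       + 2*(p$1*p$6 - p$2*p$5 + p$3*p$4)"
      "(p$1-p$6)^2 + (p$2+p$5)^2 + (p$3-p$4)^2 = ((p$1)^2 + (p$2)^2 + (p$3)^2 + (p$4)^2 + (p$5)^2 + (p$6)^2)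
       - 2*(p$1*p$6 - p$2*p$5 + p$3*p$4)"
      by (simp_all add: power2_eq_square algebra_simps)
    then show "(p$1+p$6)^2 + (p$2-p$5)^2 + (p$3+p$4)^2 = 1"
       "(p$1-p$6)^2 + (p$2+p$5)^2 + (p$3-p$4)^2 = 1" using a by simp_all
  qed
qed

lemma construct:
  fixes u1 u2 u3 w1 w2 w3 nu nw a b :: real
  assumes nu: "u2^2+u3^2 \<noteq> 0" and nw: "w2^2+w3^2 \<noteq> 0"
  shows "\<exists>v2 v3 v4 v5. u1*(a+b) + u2*(v2-v5) + u3*(v3+v4) = 0 \<and>
                       w1*(a-b) + w2*(v2+v5) + w3*(v3-v4) = 0"
proof -
  define du2 where "du2 = - (a+b)*u1*u2/(u2^2+u3^2)"
  define du3 where "du3 = - (a+b)*u1*u3/(u2^2+u3^2)"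
  define dw2 where "dw2 = - (a-b)*w1*w2/(w2^2+w3^2)"
  define dw3 where "dw3 = - (a-b)*w1*w3/(w2^2+w3^2)"
  have e1: "u1*(a+b) + u2*du2 + u3*du3 = 0"
    using nu unfolding du2_def du3_def by (simp add: field_simps power2_eq_square)
  have e2: "w1*(a-b) + w2*dw2 + w3*dw3 = 0"
    using nw unfolding dw2_def dw3_def by (simp add: field_simps power2_eq_square)
  show ?thesis
    apply (rule exI[of _ "(du2+dw2)/2"], rule exI[of _ "(du3+dw3)/2"],
           rule exI[of _ "(du3-dw3)/2"], rule exI[of _ "(dw2-du2)/2"])
    using e1 e2 by (simp add: field_simps)
qed

lemma crit_iff:
  assumes "p \<in> M_leaf h" "2*h = (1::real)"
  shows "crit_point_on_level cyl_F casimirs p \<longleftrightarrow> (p$1+p$6)^2 = 1 \<or> (p$1-p$6)^2 = 1"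
proof -
  note s = leaf_sq[OF assms]
  have DG0: "DG p v = 0 \<longleftrightarrow>
      (p$1+p$6)*(v$1+v$6) + (p$2-p$5)*(v$2-v$5) + (p$3+p$4)*(v$3+v$4) = 0 \<and>
      (p$1-p$6)*(v$1-v$6) + (p$2+p$5)*(v$2+v$5) + (p$3-p$4)*(v$3-v$4) = 0" for v
  proof -
    have "(p$1+p$6)*(v$1+v$6) + (p$2-p$5)*(v$2-v$5) + (p$3+p$4)*(v$3+v$4)
       = fst (DG p v) / 2 + snd (DG p v)"
         "(p$1-p$6)*(v$1-v$6) + (p$2+p$5)*(v$2+v$5) + (p$3-p$4)*(v$3-v$4)
       = fst (DG p v) / 2 - snd (DG p v)"
      by (simp_all add: DG_def algebra_simps)
    then show ?thesis unfolding prod_eq_iff by (simp add: zero_prod_def) linarith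
  qed
  show ?thesis
  proof
    assume c: "crit_point_on_level cyl_F casimirs p"
    show "(p$1+p$6)^2 = 1 \<or> (p$1-p$6)^2 = 1"
    proof (rule ccontr)
      assume n: "\<not> ?thesis"
      have nu: "(p$2-p$5)^2 + (p$3+p$4)^2 \<noteq> 0" using s(1) n by auto
      have nw: "(p$2+p$5)^2 + (p$3-p$4)^2 \<noteq> 0" using s(2) n by auto
      have "z \<in> (\<lambda>v. (v$1, v$6)) ` {v. DG p v = 0}" for z
      proof -
        obtain a b where z: "z = (a,b)" by (cases z)
        obtain v2 v3 v4 v5 where e:
          "(p$1+p$6)*(a+b) + (p$2-p$5)*(v2-v5) + (p$3+p$4)*(v3+v4) = 0"
          "(p$1-p$6)*(a-b) + (p$2+p$5)*(v2+v5) + (p$3-p$4)*(v3-v4) = 0"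
          using construct[OF nu nw, of "p$1+p$6" a b "p$1-p$6"] by blast
        have "DG p (mk6 a v2 v3 v4 v5 b) = 0" unfolding DG0 using e by simp
        then show ?thesis unfolding z by (intro image_eqI[of _ _ "mk6 a v2 v3 v4 v5 b"]) auto
      qed
      then have "(\<lambda>v. (v$1, v$6)) ` {v. DG p v = 0} = UNIV" by blast
      with c show False unfolding crit_eq by simp
    qed
  next
    assume "(p$1+p$6)^2 = 1 \<or> (p$1-p$6)^2 = 1"
    then show "crit_point_on_level cyl_F casimirs p"
    proof
      assume h1: "(p$1+p$6)^2 = 1"
      have "(p$2-p$5)^2 + (p$3+p$4)^2 = 0" using s(1) h1 by linarith
      then have z: "p$2-p$5 = 0" "p$3+p$4 = 0" by (simp_all add: sum_power2_eq_zero_iff)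
      have "(1,1) \<notin> (\<lambda>v. (v$1, v$6)) ` {v. DG p v = 0}"
      proof
        assume "(1,1) \<in> (\<lambda>v. (v$1, v$6)) ` {v. DG p v = 0}"
        then obtain v where "DG p v = 0" "v$1 = 1" "v$6 = 1" by auto
        then have "(p$1+p$6)*2 = 0" unfolding DG0 using z by simp
        then have "p$1+p$6 = 0" by simp
        then show False using h1 by simp
      qed
      then show ?thesis unfolding crit_eq by auto
    next
      assume h1: "(p$1-p$6)^2 = 1"
      have "(p$2+p$5)^2 + (p$3-p$4)^2 = 0" using s(2) h1 by linarith
      then have z: "p$2+p$5 = 0" "p$3-p$4 = 0" by (simp_all add: sum_power2_eq_zero_iff)
      have "(1,-1) \<notin> (\<lambda>v. (v$1, v$6)) ` {v. DG p v = 0}"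
      proof
        assume "(1,-1) \<in> (\<lambda>v. (v$1, v$6)) ` {v. DG p v = 0}"
        then obtain v where "DG p v = 0" "v$1 = 1" "v$6 = -1" by auto
        then have "(p$1-p$6)*2 = 0" unfolding DG0 using z by simp
        then have "p$1-p$6 = 0" by simp
        then show False using h1 by simp
      qed
      then show ?thesis unfolding crit_eq by auto
    qed
  qed
qed

lemma img_filter: "f ` {x \<in> A. f x \<in> S} = f ` A \<inter> S"
  by blast

theorem proposition8:
  assumes "2 * h = (1::real)"
  shows "bifurcation_diagram h =
           cyl_F ` M_leaf h \<inter>
           {(x, y). y = 1 + x \<or> y = -(1 + x) \<or> y = 1 - x \<or> y = -(1 - x)}
         \<and> {(1, 0), (-1, 0), (0, 1), (0, -1)} \<subseteq> bifurcation_diagram h"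
proof -
  let ?S = "{(x, y). y = 1 + x \<or> y = -(1 + x) \<or> y = 1 - x \<or> y = -(1 - x)} :: (real \<times> real) set"
  have key: "crit_point_on_level cyl_F casimirs p \<longleftrightarrow> cyl_F p \<in> ?S" if "p \<in> M_leaf h" for p
  proof -
    have "((p$1+p$6)^2 = 1 \<or> (p$1-p$6)^2 = 1) \<longleftrightarrow> cyl_F p \<in> ?S"
      unfolding cyl_F_def l12_def l34_def power2_eq_1_iff by auto
    then show ?thesis using crit_iff[OF that assms] by simp
  qed
  have eq: "bifurcation_diagram h = cyl_F ` M_leaf h \<inter> ?S"
  proof -
    have "{p \<in> M_leaf h. crit_point_on_level cyl_F casimirs p} = {p \<in> M_leaf h. cyl_F p \<in> ?S}"
    proof (intro Collect_cong)
      fix p show "(p \<in> M_leaf h \<and> crit_point_on_level cyl_F casimirs p) = (p \<in> M_leaf h \<and> cyl_F p \<in> ?S)"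
      proof (cases "p \<in> M_leaf h")
        case True
        show ?thesis using key[OF True] by (simp only: True simp_thms)
      qed simp
    qed
    note cc = this
    show ?thesis unfolding bifurcation_diagram_def cc img_filter ..
  qed
  have M: "mk6 c 0 0 0 0 d \<in> M_leaf h" if "c^2 + d^2 = 1" "c * d = 0" for c d
    using that assms unfolding M_leaf_def casimirs_def l12_def l13_def l14_def l23_def l24_def l34_def
    by simp
  have F: "cyl_F (mk6 c 0 0 0 0 d) = (c, d)" for c d
    unfolding cyl_F_def l12_def l34_def by simp
  have "(c, d) \<in> cyl_F ` M_leaf h" if "c^2 + d^2 = 1" "c * d = 0" for c d
    using M[OF that] F[of c d] by (metis image_eqI)
  then have "{(1, 0), (-1, 0), (0, 1), (0, -1)} \<subseteq> cyl_F ` M_leaf h \<inter> ?S"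
    by auto
  with eq show ?thesis by simp
qed

end
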